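(* Let $\mathbb{M}$ be the generic structure of the class $\mathbb{C}$, and let $\widehat{\mathbb{M}}=(\mathcal{G}(\mathbb{M}))^{\mathrm{geo}}$, an $\{S\}$-structure on the same universe as $\mathbb{M}$ which is isomorphic to the generic structure $\mathbb{M}^{\mathrm{geo}}$ of $\mathcal{C}^{\mathrm{geo}}$. Identifying $\widehat{\mathbb{M}}$ with $\mathbb{M}^{\mathrm{geo}}$, we have $\mathcal{G}(\mathbb{M})=\mathcal{G}(\mathbb{M}^{\mathrm{geo}})$, i.e. the geometries $\mathcal{G}(\mathbb{M})$ and $\mathcal{G}(\widehat{\mathbb{M}})$ on the common universe are equal (have the same dimension function).
   Context: Fix a natural number $n$ and a symmetric irreflexive $n$-ary relation symbol $S$; substructures are induced. For an $\{S\}$-structure $A$, $K\subseteq A$ with $|K|\ge n$ is a clique if all $n$-element subsets of $K$ (as tuples of distinct elements) lie in $S^A$; maximal cliques are those not properly contained in another clique; $\mathcal{M}(A)$ is the set of maximal cliques. For finite $X$, $|X|_*=\max\{0,|X|-(n-1)\}$; for finite $A$, $\delta_s(A)=|A|-\sum_{K\in\mathcal{M}(A)}|K|_*$; for finite $B\subseteq A$, $\delta_s(A/B)=\delta_s(A)-\delta_s(B)$, and for arbitrary $B\subseteq A$, $\delta_s(A/B)=\inf\{\delta_s(X/X\cap B):X\subseteq A\text{ finite}\}$; $B\le A$ means $\delta_s(X/B)\ge0$ for all $X$ with $B\subseteq X\subseteq A$. An embedding $f:A\to B$ is strong if $f[A]\le B$. $\mathcal{C}^{\mathrm{clq}}_0$: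 finite $\{S\}$-structures in which distinct maximal cliques meet in fewer than $n$ points; $\mathcal{C}^{\mathrm{clq}}$: those $A\in\mathcal{C}^{\mathrm{clq}}_0$ with $\{a\}\le A$ for all $a$; $\mathcal{C}^{\mathrm{sym}}$: those $A\in\mathcal{C}^{\mathrm{clq}}$ all of whose maximal cliques have exactly $n$ elements. For an $\{S\}$-structure $A$ with $\{a\}\le A$ for all $a$, the associated geometry $\mathcal{G}(A)$ is the geometry (finitary matroid with $\mathrm{cl}(\emptyset)=\emptyset$, singletons closed) on the universe of $A$ with dimension $d(X)=\inf\{\delta_s(Y):X\subseteq Y\subseteq A,\ Y\text{ finite}\}$ for finite $X$. A geometry is $m$-pure if $m$ is the maximal natural number such that every $m$-element subset is independent. For a geometry $\mathbf{A}$ on $A$, $\mathbf{A}^{\mathrm{geo}}$ is the $\{S\}$-structure on $A$ whose maximal cliques are exactly the sets $\mathrm{cl}_{\mathbf{A}}(C)$, $C\in[A]^{n-1}$, $\mathrm{cl}_{\mathbf{A}}(C)\neq C$. An $\{S\}$-structure $A$ is geometric if whenever $X\subseteq A$ is finite, $|X|\ge n$ and $\delta_s(X)<n$, there is a unique maximal clique of $A$ containing $X$; $\mathcal{C}^{\mathrm{geo}}$ is the class of finite geometric $\{S\}$-structures. $\mathbb{C}$ is the class of $A\in\mathcal{C}^{\mathrm{sym}}$ with $\mathcal{G}(A)$ $(n-1)$-pure. For a class of finite structures closed under isomorphism and substructures with the joint embedding and amalgamation properties with respect to strong embeddings (as $\mathbb{C}$ and $\mathcal{C}^{\mathrm{geo}}$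 are), the generic structure is the unique countable structure $\mathbb{M}$ whose finite substructures lie in the class and such that whenever $A\le\mathbb{M}$ is finite and $A\le D$ with $D$ in the class, there is an embedding $f:D\to\mathbb{M}$ fixing $A$ pointwise with $f[D]\le\mathbb{M}$. *)

theory Defs
  imports Main "HOL-Library.Extended_Real" "HOL-Library.Multiset" "HOL-Library.Countable_Set"
begin

text \<open>An n-ary relation symbol S is interpreted by a predicate on lists (tuples).
  A structure is a universe U together with such a predicate R.\<close>

definition is_struc :: "nat \<Rightarrow> 'a set \<Rightarrow> ('a list \<Rightarrow> bool) \<Rightarrow> bool" where
  "is_struc n U R \<longleftrightarrow>
     (\<forall>xs. R xs \<longrightarrow> length xs = n \<and> distinct xs \<and> set xs \<subseteq> U) \<and>
     (\<forall>xs ys. R xs \<longrightarrow> mset ys = mset xs \<longrightarrow> R ys)"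

definition restr :: "('a list \<Rightarrow> bool) \<Rightarrow> 'a set \<Rightarrow> 'a list \<Rightarrow> bool" where
  "restr R B = (\<lambda>xs. R xs \<and> set xs \<subseteq> B)"

definition clique :: "nat \<Rightarrow> 'a set \<Rightarrow> ('a list \<Rightarrow> bool) \<Rightarrow> 'a set \<Rightarrow> bool" where
  "clique n U R K \<longleftrightarrow> K \<subseteq> U \<and> (infinite K \<or> n \<le> card K) \<and>
     (\<forall>xs. length xs = n \<and> distinct xs \<and> set xs \<subseteq> K \<longrightarrow> R xs)"

definition maxcliques :: "nat \<Rightarrow> 'a set \<Rightarrow> ('a list \<Rightarrow> bool) \<Rightarrow> 'a set set" where
  "maxcliques n U R = {K. clique n U R K \<and> \<not> (\<exists>K'. clique n U R K' \<and> K \<subset> K')}"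

definition starcard :: "nat \<Rightarrow> 'a set \<Rightarrow> int" where
  "starcard n X = max 0 (int (card X) - (int n - 1))"

definition delta :: "nat \<Rightarrow> ('a list \<Rightarrow> bool) \<Rightarrow> 'a set \<Rightarrow> int" where
  "delta n R X = int (card X) - (\<Sum>K \<in> maxcliques n X (restr R X). starcard n K)"

definition delta_rel :: "nat \<Rightarrow> ('a list \<Rightarrow> bool) \<Rightarrow> 'a set \<Rightarrow> 'a set \<Rightarrow> ereal" where
  "delta_rel n R A B =
     (if finite A then ereal (real_of_int (delta n R A - delta n R B))
      else (INF X \<in> {X. X \<subseteq> A \<and> finite X}.
              ereal (real_of_int (delta n R X - delta n R (X \<inter> B)))))"

definition strong :: "nat \<Rightarrow> 'a set \<Rightarrow> ('a list \<Rightarrow> bool) \<Rightarrow> 'a set \<Rightarrow> bool" where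
  "strong n U R B \<longleftrightarrow> B \<subseteq> U \<and> (\<forall>X. B \<subseteq> X \<and> X \<subseteq> U \<longrightarrow> delta_rel n R X B \<ge> 0)"

definition dim :: "nat \<Rightarrow> 'a set \<Rightarrow> ('a list \<Rightarrow> bool) \<Rightarrow> 'a set \<Rightarrow> ereal" where
  "dim n U R X = (INF Y \<in> {Y. X \<subseteq> Y \<and> Y \<subseteq> U \<and> finite Y}. ereal (real_of_int (delta n R Y)))"

definition indep :: "nat \<Rightarrow> 'a set \<Rightarrow> ('a list \<Rightarrow> bool) \<Rightarrow> 'a set \<Rightarrow> bool" where
  "indep n U R X \<longleftrightarrow> dim n U R X = ereal (real (card X))"

definition gcl :: "nat \<Rightarrow> 'a set \<Rightarrow> ('a list \<Rightarrow> bool) \<Rightarrow> 'a set \<Rightarrow> 'a set" where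
  "gcl n U R X = {a \<in> U. dim n U R (insert a X) = dim n U R X}"

definition inC0 :: "nat \<Rightarrow> 'a set \<Rightarrow> ('a list \<Rightarrow> bool) \<Rightarrow> bool" where
  "inC0 n U R \<longleftrightarrow> finite U \<and> is_struc n U R \<and>
     (\<forall>K1 \<in> maxcliques n U R. \<forall>K2 \<in> maxcliques n U R. K1 \<noteq> K2 \<longrightarrow> card (K1 \<inter> K2) < n)"

definition inCclq :: "nat \<Rightarrow> 'a set \<Rightarrow> ('a list \<Rightarrow> bool) \<Rightarrow> bool" where
  "inCclq n U R \<longleftrightarrow> inC0 n U R \<and> (\<forall>a \<in> U. strong n U R {a})"

definition inCsym :: "nat \<Rightarrow> 'a set \<Rightarrow> ('a list \<Rightarrow> bool) \<Rightarrow> bool" where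
  "inCsym n U R \<longleftrightarrow> inCclq n U R \<and> (\<forall>K \<in> maxcliques n U R. card K = n)"

text \<open>The class \<open>\<bbbC>\<close>: (n-1)-purity read as "every (n-1)-element subset is independent".\<close>
definition inCC :: "nat \<Rightarrow> 'a set \<Rightarrow> ('a list \<Rightarrow> bool) \<Rightarrow> bool" where
  "inCC n U R \<longleftrightarrow> inCsym n U R \<and>
     (\<forall>X. X \<subseteq> U \<and> card X = n - 1 \<longrightarrow> indep n U R X)"

text \<open>(U,R) is the generic structure of \<open>\<bbbC>\<close> (structures realised on nat).\<close>
definition generic_CC :: "nat \<Rightarrow> nat set \<Rightarrow> (nat list \<Rightarrow> bool) \<Rightarrow> bool" where
  "generic_CC n U R \<longleftrightarrow> countable U \<and> is_struc n U R \<and>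
     (\<forall>B. finite B \<and> B \<subseteq> U \<longrightarrow> inCC n B (restr R B)) \<and>
     (\<forall>A UD RD. finite A \<and> strong n U R A \<and> A \<subseteq> UD \<and> inCC n UD RD \<and>
        restr RD A = restr R A \<and> strong n UD RD A \<longrightarrow>
        (\<exists>f. inj_on f UD \<and> f ` UD \<subseteq> U \<and> (\<forall>a \<in> A. f a = a) \<and>
             (\<forall>xs. set xs \<subseteq> UD \<longrightarrow> (RD xs \<longleftrightarrow> R (map f xs))) \<and>
             strong n U R (f ` UD)))"

end

theory Submission
  imports Defs
begin

lemma zorn_clique:
  assumes "clique n U R' K"
  shows "\<exists>M\<in>maxcliques n U R'. K \<subseteq> M"
proof -
  let ?A = "{K'. clique n U R' K' \<and> K \<subseteq> K'}"
  have "\<exists>M\<in>?A. \<forall>X\<in>?A. M \<subseteq> X \<longrightarrow> X = M"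
  proof (rule subset_Zorn_nonempty)
    show "?A \<noteq> {}" using assms by blast
  next
    fix C assume C: "C \<noteq> {}" "subset.chain ?A C"
    then obtain K0 where K0: "K0 \<in> C" by blast
    have sub: "\<And>K'. K' \<in> C \<Longrightarrow> clique n U R' K' \<and> K \<subseteq> K'"
      using C by (auto simp: subset.chain_def)
    have "\<Union>C \<subseteq> U" using sub by (auto simp: clique_def)
    moreover have "infinite (\<Union>C) \<or> n \<le> card (\<Union>C)"
    proof (cases "finite (\<Union>C)")
      case True
      have "K0 \<subseteq> \<Union>C" using K0 by blast
      hence "finite K0" using True finite_subset by blast
      hence "n \<le> card K0" using sub[OF K0] by (auto simp: clique_def)
      also have "\<dots> \<le> card (\<Union>C)" using True \<open>K0 \<subseteq> \<Union>C\<close> card_mono by blast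
      finally show ?thesis by simp
    qed simp
    moreover have "R' xs" if H: "length xs = n" "distinct xs" "set xs \<subseteq> \<Union>C" for xs
    proof -
      obtain B where "B \<in> C" "set xs \<subseteq> B"
        using finite_subset_Union_chain[OF _ H(3) C(1) C(2)] by blast
      then show ?thesis using sub H by (auto simp: clique_def)
    qed
    moreover have "K \<subseteq> \<Union>C" using sub K0 by blast
    ultimately show "\<Union>C \<in> ?A" by (auto simp: clique_def)
  qed
  then obtain M where M: "M \<in> ?A" "\<forall>X\<in>?A. M \<subseteq> X \<longrightarrow> X = M" by blast
  have "M \<in> maxcliques n U R'"
    unfolding maxcliques_def using M by auto
  then show ?thesis using M by blast
qed

lemma restr_restr: "Y \<subseteq> W \<Longrightarrow> restr (restr R W) Y = restr R Y"
  by (auto simp: restr_def fun_eq_iff)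

lemma delta_restr: "Y \<subseteq> W \<Longrightarrow> delta n (restr R W) Y = delta n R Y"
  unfolding delta_def by (simp add: restr_restr)

lemma dim_le: "X \<subseteq> Y \<Longrightarrow> Y \<subseteq> U \<Longrightarrow> finite Y \<Longrightarrow> dim n U R X \<le> ereal (real_of_int (delta n R Y))"
  unfolding dim_def by (rule INF_lower) auto

lemma dim_ge: "(\<And>Y. X \<subseteq> Y \<Longrightarrow> Y \<subseteq> U \<Longrightarrow> finite Y \<Longrightarrow> m \<le> delta n R Y) \<Longrightarrow> ereal (real_of_int m) \<le> dim n U R X"
  unfolding dim_def by (rule INF_greatest) auto

lemma dim_witness:
  assumes "dim n U R X \<le> ereal (real_of_int m)"
  shows "\<exists>Y. X \<subseteq> Y \<and> Y \<subseteq> U \<and> finite Y \<and> delta n R Y \<le> m"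
proof (rule ccontr)
  assume "\<not> ?thesis"
  hence "\<And>Y. X \<subseteq> Y \<Longrightarrow> Y \<subseteq> U \<Longrightarrow> finite Y \<Longrightarrow> m + 1 \<le> delta n R Y" by force
  hence "ereal (real_of_int (m+1)) \<le> dim n U R X" by (rule dim_ge)
  with assms have "ereal (real_of_int (m+1)) \<le> ereal (real_of_int m)" by (rule order_trans[rotated])
  then show False by simp
qed

definition edge :: "nat \<Rightarrow> (nat list \<Rightarrow> bool) \<Rightarrow> nat set \<Rightarrow> bool" where
  "edge n R K \<longleftrightarrow> card K = n \<and> (\<forall>xs. length xs = n \<and> distinct xs \<and> set xs \<subseteq> K \<longrightarrow> R xs)"

definition E :: "nat \<Rightarrow> (nat list \<Rightarrow> bool) \<Rightarrow> nat set \<Rightarrow> nat set set" where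
  "E n R X = {K. K \<subseteq> X \<and> edge n R K}"

lemma finite_E: "finite X \<Longrightarrow> finite (E n R X)"
  unfolding E_def by (rule finite_subset[of _ "Pow X"]) auto

lemma maxcliques_sym:
  assumes "finite X" "inCsym n X R'"
  shows "maxcliques n X R' = {K. clique n X R' K \<and> card K = n}"
proof
  show "maxcliques n X R' \<subseteq> {K. clique n X R' K \<and> card K = n}"
    using assms(2) by (auto simp: inCsym_def maxcliques_def)
next
  show "{K. clique n X R' K \<and> card K = n} \<subseteq> maxcliques n X R'"
  proof
    fix K assume "K \<in> {K. clique n X R' K \<and> card K = n}"
    hence K: "clique n X R' K" "card K = n" by auto
    have "\<not> (clique n X R' K' \<and> K \<subset> K')" for K'
    proof
      assume "clique n X R' K' \<and> K \<subset> K'"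
      hence K': "clique n X R' K'" "K \<subset> K'" by auto
      obtain M where M: "M \<in> maxcliques n X R'" "K' \<subseteq> M" using zorn_clique[OF K'(1)] by blast
      have "finite M" using M(1) assms(1) finite_subset by (auto simp: maxcliques_def clique_def)
      hence "card K < card M" using K'(2) M(2) psubset_card_mono[of M K] by (meson order_less_le_trans psubset_card_mono psubset_subset_trans subset_not_subset_eq)
      moreover have "card M = n" using assms(2) M(1) by (auto simp: inCsym_def)
      ultimately show False using K by simp
    qed
    then show "K \<in> maxcliques n X R'" using K unfolding maxcliques_def by blast
  qed
qed

lemma delta_formula:
  assumes "finite X" "inCsym n X (restr R X)"
  shows "delta n R X = int (card X) - int (card (E n R X))"
proof -
  have "maxcliques n X (restr R X) = E n R X"
    unfolding maxcliques_sym[OF assms]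
    by (auto simp: clique_def E_def edge_def restr_def)
  moreover have "\<And>K. K \<in> E n R X \<Longrightarrow> starcard n K = 1"
    by (auto simp: E_def edge_def starcard_def)
  ultimately show ?thesis unfolding delta_def by simp
qed


locale mt =
  fixes n :: nat and U :: "nat set" and R Rhat :: "nat list \<Rightarrow> bool"
  assumes finCC: "\<And>B. finite B \<Longrightarrow> B \<subseteq> U \<Longrightarrow> inCC n B (restr R B)"
    and hstruc: "is_struc n U Rhat"
    and hcl: "maxcliques n U Rhat =
        {gcl n U R C | C. C \<subseteq> U \<and> finite C \<and> card C = n - 1 \<and> gcl n U R C \<noteq> C}"
    and npos: "1 \<le> n"
begin

lemma dform: "finite X \<Longrightarrow> X \<subseteq> U \<Longrightarrow> delta n R X = int (card X) - int (card (E n R X))"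
  using finCC delta_formula by (simp add: inCC_def)

lemma pure:
  assumes "C \<subseteq> W" "W \<subseteq> U" "finite W" "card C = n - 1"
  shows "int (n - 1) \<le> delta n R W"
proof -
  have "indep n W (restr R W) C" using finCC[OF assms(3,2)] assms by (auto simp: inCC_def)
  hence "dim n W (restr R W) C = ereal (real (n - 1))" using assms by (simp add: indep_def)
  moreover have "dim n W (restr R W) C \<le> ereal (real_of_int (delta n (restr R W) W))"
    using assms by (intro dim_le) auto
  ultimately show ?thesis using delta_restr[of W W] by simp
qed

lemma strong_single:
  assumes "finite Z" "Z \<subseteq> U" "a \<in> Z"
  shows "delta n R {a} \<le> delta n R Z"
proof -
  have "strong n Z (restr R Z) {a}" using finCC[OF assms(1,2)] assms(3) by (simp add: inCC_def inCsym_def inCclq_def)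
  hence "delta_rel n (restr R Z) Z {a} \<ge> 0" using assms by (auto simp: strong_def)
  thus ?thesis using assms delta_restr[of Z Z] delta_restr[of "{a}" Z] by (simp add: delta_rel_def)
qed

lemma E_single: "E n R {a} \<subseteq> {{a}}"
  using npos by (auto simp: E_def edge_def subset_singleton_iff)

lemma E_single2: "2 \<le> n \<Longrightarrow> E n R {a} = {}"
  by (auto simp: E_def edge_def subset_singleton_iff)

lemma E_empty: "E n R {} = {}"
  using npos by (auto simp: E_def edge_def)

lemma delta_nonneg:
  assumes "finite Z" "Z \<subseteq> U"
  shows "0 \<le> delta n R Z"
proof (cases "Z = {}")
  case True thus ?thesis using dform[of "{}"] E_empty by simp
next
  case False
  then obtain a where a: "a \<in> Z" by blast
  have "card (E n R {a}) \<le> 1" using E_single card_mono[of "{{a}}" "E n R {a}"] by simp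
  have "a \<in> U" using a assms by auto
  hence "0 \<le> delta n R {a}" using dform[of "{a}"] \<open>card (E n R {a}) \<le> 1\<close> by simp
  thus ?thesis using strong_single[OF assms a] by simp
qed

lemma delta_le_card: "finite X \<Longrightarrow> X \<subseteq> U \<Longrightarrow> delta n R X \<le> int (card X)"
  using dform by simp

lemma submod:
  assumes "finite A" "finite B" "A \<subseteq> U" "B \<subseteq> U"
  shows "delta n R (A \<union> B) + delta n R (A \<inter> B) \<le> delta n R A + delta n R B"
proof -
  have u: "E n R A \<union> E n R B \<subseteq> E n R (A \<union> B)" by (auto simp: E_def)
  have i: "E n R A \<inter> E n R B = E n R (A \<inter> B)" by (auto simp: E_def)
  have fin: "finite (E n R A)" "finite (E n R B)" "finite (E n R (A \<union> B))" using assms finite_E by auto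
  have "card (E n R A) + card (E n R B) = card (E n R A \<union> E n R B) + card (E n R A \<inter> E n R B)"
    using card_Un_Int[OF fin(1,2)] .
  also have "\<dots> \<le> card (E n R (A \<union> B)) + card (E n R (A \<inter> B))"
    using card_mono[OF fin(3) u] i by simp
  finally have *: "card (E n R A) + card (E n R B) \<le> card (E n R (A \<union> B)) + card (E n R (A \<inter> B))" .
  have "card A + card B = card (A \<union> B) + card (A \<inter> B)" using card_Un_Int assms by blast
  moreover have "finite (A \<inter> B)" "A \<inter> B \<subseteq> U" "finite (A \<union> B)" "A \<union> B \<subseteq> U" using assms by auto
  ultimately show ?thesis using * assms dform[of A] dform[of B] dform[of "A \<union> B"] dform[of "A \<inter> B"] by simp
qed

lemma dimC:
  assumes "C \<subseteq> U" "finite C" "card C = n - 1"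
  shows "dim n U R C = ereal (real (n - 1))"
proof (rule antisym)
  have "dim n U R C \<le> ereal (real_of_int (delta n R C))" by (rule dim_le) (use assms in auto)
  moreover have "ereal (real_of_int (delta n R C)) \<le> ereal (real (n - 1))" using delta_le_card[of C] assms by simp
  ultimately show "dim n U R C \<le> ereal (real (n - 1))" by (rule order_trans)
  show "ereal (real (n - 1)) \<le> dim n U R C"
    using dim_ge[of C U "int (n - 1)" n R] pure assms by simp
qed

lemma gcl_iff:
  assumes "C \<subseteq> U" "finite C" "card C = n - 1"
  shows "x \<in> gcl n U R C \<longleftrightarrow> x \<in> U \<and> (\<exists>W. insert x C \<subseteq> W \<and> W \<subseteq> U \<and> finite W \<and> delta n R W \<le> int (n - 1))"
proof
  assume x: "x \<in> gcl n U R C"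
  hence "dim n U R (insert x C) = ereal (real (n - 1))" using dimC[OF assms] by (simp add: gcl_def)
  hence "dim n U R (insert x C) \<le> ereal (real_of_int (int (n - 1)))" by simp
  from dim_witness[OF this] x show "x \<in> U \<and> (\<exists>W. insert x C \<subseteq> W \<and> W \<subseteq> U \<and> finite W \<and> delta n R W \<le> int (n - 1))"
    by (auto simp: gcl_def)
next
  assume x: "x \<in> U \<and> (\<exists>W. insert x C \<subseteq> W \<and> W \<subseteq> U \<and> finite W \<and> delta n R W \<le> int (n - 1))"
  then obtain W where W: "insert x C \<subseteq> W" "W \<subseteq> U" "finite W" "delta n R W \<le> int (n - 1)" by blast
  have "dim n U R (insert x C) \<le> ereal (real_of_int (delta n R W))" using dim_le[OF W(1-3), of n R] .
  moreover have "ereal (real_of_int (delta n R W)) \<le> ereal (real (n - 1))" using W(4) by simp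
  ultimately have "dim n U R (insert x C) \<le> ereal (real (n - 1))" by (rule order_trans)
  moreover have "ereal (real (n - 1)) \<le> dim n U R (insert x C)"
    using dim_ge[of "insert x C" U "int (n - 1)" n R] pure assms by auto
  ultimately show "x \<in> gcl n U R C" using x dimC[OF assms] by (auto simp: gcl_def)
qed

lemma W_in_gcl:
  assumes "C \<subseteq> W" "W \<subseteq> U" "finite W" "delta n R W \<le> int (n - 1)" "card C = n - 1"
  shows "W \<subseteq> gcl n U R C"
proof -
  have CU: "C \<subseteq> U" "finite C" using assms finite_subset by auto
  show ?thesis
  proof
    fix x assume x: "x \<in> W"
    hence "insert x C \<subseteq> W" "x \<in> U" using assms by auto
    thus "x \<in> gcl n U R C" using gcl_iff[OF CU assms(5)] assms by blast
  qed
qed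

lemma C_in_gcl:
  assumes "C \<subseteq> U" "finite C" "card C = n - 1"
  shows "C \<subseteq> gcl n U R C"
  using W_in_gcl[of C C] assms delta_le_card[of C] by auto

lemma cl_fin:
  assumes C: "C \<subseteq> U" "finite C" "card C = n - 1" and F: "finite F" "F \<subseteq> gcl n U R C"
  shows "\<exists>W. C \<union> F \<subseteq> W \<and> W \<subseteq> U \<and> finite W \<and> delta n R W \<le> int (n - 1)"
  using F
proof (induction F rule: finite_induct)
  case empty
  then show ?case using C delta_le_card[of C] by (intro exI[of _ C]) auto
next
  case (insert x F)
  then obtain W1 where W1: "C \<union> F \<subseteq> W1" "W1 \<subseteq> U" "finite W1" "delta n R W1 \<le> int (n - 1)" by auto
  obtain W2 where W2: "insert x C \<subseteq> W2" "W2 \<subseteq> U" "finite W2" "delta n R W2 \<le> int (n - 1)"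
    using gcl_iff[OF C] insert by auto
  have "int (n - 1) \<le> delta n R (W1 \<inter> W2)"
    using pure[of C "W1 \<inter> W2"] W1 W2 C by auto
  with submod[of W1 W2] W1 W2 have "delta n R (W1 \<union> W2) \<le> int (n - 1)" by auto
  then show ?case using W1 W2 by (intro exI[of _ "W1 \<union> W2"]) auto
qed

lemma gcl_sub:
  assumes C: "C \<subseteq> U" "finite C" "card C = n - 1" and D: "finite D" "card D = n - 1" "D \<subseteq> gcl n U R C"
  shows "gcl n U R C \<subseteq> gcl n U R D \<and> C \<subseteq> gcl n U R D"
proof
  have DU: "D \<subseteq> U" using D(3) by (auto simp: gcl_def)
  show "gcl n U R C \<subseteq> gcl n U R D"
  proof
    fix x assume x: "x \<in> gcl n U R C"
    obtain W where W: "C \<union> insert x D \<subseteq> W" "W \<subseteq> U" "finite W" "delta n R W \<le> int (n - 1)"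
      using cl_fin[OF C, of "insert x D"] D x by auto
    thus "x \<in> gcl n U R D" using W_in_gcl[of D W] D by auto
  qed
  obtain W where W: "C \<union> D \<subseteq> W" "W \<subseteq> U" "finite W" "delta n R W \<le> int (n - 1)"
    using cl_fin[OF C, of D] D by auto
  thus "C \<subseteq> gcl n U R D" using W_in_gcl[of D W] D by auto
qed

lemma line_eq:
  assumes C: "C \<subseteq> U" "finite C" "card C = n - 1" and D: "finite D" "card D = n - 1" "D \<subseteq> gcl n U R C"
  shows "gcl n U R D = gcl n U R C"
proof -
  have DU: "D \<subseteq> U" using D(3) by (auto simp: gcl_def)
  have 1: "gcl n U R C \<subseteq> gcl n U R D" "C \<subseteq> gcl n U R D" using gcl_sub[OF C D] by auto
  have "gcl n U R D \<subseteq> gcl n U R C" using gcl_sub[OF DU D(1,2) C(2,3) 1(2)] by auto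
  with 1 show ?thesis by auto
qed


end

context mt begin

lemma line_clique:
  assumes "C \<subseteq> U" "finite C" "card C = n - 1" "gcl n U R C \<noteq> C"
  shows "clique n U Rhat (gcl n U R C)"
proof -
  have "gcl n U R C \<in> maxcliques n U Rhat" using hcl assms by blast
  thus ?thesis by (simp add: maxcliques_def)
qed

lemma Rhat_line:
  assumes "Rhat xs"
  shows "\<exists>C. C \<subseteq> U \<and> finite C \<and> card C = n - 1 \<and> gcl n U R C \<noteq> C \<and> set xs \<subseteq> gcl n U R C"
proof -
  have xs: "length xs = n" "distinct xs" "set xs \<subseteq> U" using hstruc assms by (auto simp: is_struc_def)
  have "clique n U Rhat (set xs)"
    unfolding clique_def
  proof (intro conjI allI impI)
    show "set xs \<subseteq> U" by fact
    show "infinite (set xs) \<or> n \<le> card (set xs)" using xs by (simp add: distinct_card)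
    fix ys assume ys: "length ys = n \<and> distinct ys \<and> set ys \<subseteq> set xs"
    have "card (set ys) = card (set xs)" using ys xs distinct_card by metis
    hence "set ys = set xs" using ys card_subset_eq by blast
    hence "mset ys = mset xs" using set_eq_iff_mset_eq_distinct ys xs by blast
    thus "Rhat ys" using hstruc assms by (auto simp: is_struc_def)
  qed
  then obtain M where "M \<in> maxcliques n U Rhat" "set xs \<subseteq> M" using zorn_clique by blast
  thus ?thesis using hcl by auto
qed

lemma sub_n1:
  assumes "n \<le> card T" shows "\<exists>C. C \<subseteq> T \<and> card C = n - 1 \<and> finite C"
proof -
  have "n - 1 \<le> card T" using assms by simp
  then obtain C where "C \<subseteq> T" "card C = n - 1" "finite C" by (rule obtain_subset_with_card_n)
  thus ?thesis by blast
qed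

lemma card_finite_n: "card K = n \<Longrightarrow> finite K"
  using npos by (cases "finite K") auto

lemma T_line:
  assumes Y: "finite Y" "Y \<subseteq> U" and T: "T \<in> maxcliques n Y (restr Rhat Y)"
  shows "\<exists>C. C \<subseteq> T \<and> finite C \<and> card C = n - 1 \<and> gcl n U R C \<noteq> C \<and> T = gcl n U R C \<inter> Y"
proof -
  have Tc: "clique n Y (restr Rhat Y) T" and Tmax: "\<not> (\<exists>K'. clique n Y (restr Rhat Y) K' \<and> T \<subset> K')"
    using T by (auto simp: maxcliques_def)
  have TY: "T \<subseteq> Y" using Tc by (simp add: clique_def)
  hence fT: "finite T" using Y finite_subset by blast
  have nT: "n \<le> card T" using Tc fT by (simp add: clique_def)
  obtain C where C: "C \<subseteq> T" "card C = n - 1" using sub_n1[OF nT] by blast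
  have fC: "finite C" using C fT finite_subset by blast
  have CU: "C \<subseteq> U" using C TY Y by auto
  have key: "q \<in> gcl n U R C" if q: "q \<in> T" for q
  proof (cases "q \<in> C")
    case True thus ?thesis using C_in_gcl[OF CU fC C(2)] by blast
  next
    case False
    obtain xs0 where sx0: "set xs0 = insert q C" "distinct xs0" using finite_distinct_list[of "insert q C"] fC by auto
    let ?xs = xs0
    have sx: "set ?xs = insert q C" "distinct ?xs" using sx0 by auto
    have "length ?xs = n" using fC False C(2) npos sx distinct_card[OF sx(2)] by simp
    hence "restr Rhat Y ?xs" using Tc sx q C(1) by (auto simp: clique_def)
    hence "Rhat ?xs" by (simp add: restr_def)
    then obtain C' where C': "C' \<subseteq> U" "finite C'" "card C' = n - 1" "set ?xs \<subseteq> gcl n U R C'"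
      using Rhat_line by blast
    have "gcl n U R C = gcl n U R C'" using line_eq[OF C'(1-3) fC C(2)] C'(4) sx by auto
    thus ?thesis using C'(4) sx by auto
  qed
  have "card C < card T" using C nT npos by simp
  moreover have "\<not> T \<subseteq> C"
  proof
    assume "T \<subseteq> C"
    hence "card T \<le> card C" using card_mono fC by blast
    thus False using \<open>card C < card T\<close> by simp
  qed
  ultimately obtain p where p: "p \<in> T" "p \<notin> C" by blast
  hence ne: "gcl n U R C \<noteq> C" using key by blast
  have lc: "clique n U Rhat (gcl n U R C)" using line_clique[OF CU fC C(2) ne] .
  have "clique n Y (restr Rhat Y) (gcl n U R C \<inter> Y)"
    unfolding clique_def
  proof (intro conjI allI impI)
    show "gcl n U R C \<inter> Y \<subseteq> Y" by blast
    have "T \<subseteq> gcl n U R C \<inter> Y" using key TY by blast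
    hence "card T \<le> card (gcl n U R C \<inter> Y)" using Y card_mono by (metis finite_Int)
    thus "infinite (gcl n U R C \<inter> Y) \<or> n \<le> card (gcl n U R C \<inter> Y)" using nT by simp
    fix xs assume "length xs = n \<and> distinct xs \<and> set xs \<subseteq> gcl n U R C \<inter> Y"
    thus "restr Rhat Y xs" using lc by (auto simp: clique_def restr_def)
  qed
  moreover have "T \<subseteq> gcl n U R C \<inter> Y" using key TY by blast
  ultimately have "T = gcl n U R C \<inter> Y" using Tmax by blast
  thus ?thesis using C fC ne by blast
qed

lemma edge_line:
  assumes "finite Y" "Y \<subseteq> U" "K \<in> E n R Y" "C \<subseteq> K" "card C = n - 1"
  shows "K \<subseteq> gcl n U R C \<and> gcl n U R C \<noteq> C"
proof -
  have K: "K \<subseteq> Y" "card K = n" using assms by (auto simp: E_def edge_def)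
  have fK: "finite K" using card_finite_n K by blast
  have KU: "K \<subseteq> U" using K assms by auto
  have "K \<in> E n R K" using assms by (auto simp: E_def)
  hence "1 \<le> card (E n R K)" using finite_E[OF fK] by (metis One_nat_def Suc_leI card_gt_0_iff empty_iff)
  hence "delta n R K \<le> int (n - 1)" using dform[OF fK KU] K npos by simp
  hence sub: "K \<subseteq> gcl n U R C" using W_in_gcl[of C K] assms KU fK by blast
  have "gcl n U R C \<noteq> C"
  proof
    assume "gcl n U R C = C"
    hence "card K \<le> card C" using sub card_mono fK assms(4) finite_subset by metis
    thus False using K assms npos by simp
  qed
  thus ?thesis using sub by blast
qed

lemma edge_in_T:
  assumes Y: "finite Y" "Y \<subseteq> U" and K: "K \<in> E n R Y"
  shows "\<exists>T\<in>maxcliques n Y (restr Rhat Y). K \<subseteq> T"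
proof -
  have K': "K \<subseteq> Y" "card K = n" using K by (auto simp: E_def edge_def)
  obtain C where C: "C \<subseteq> K" "card C = n - 1" using sub_n1[of K] K' by auto
  have fC: "finite C" using C card_finite_n K' finite_subset by blast
  have CU: "C \<subseteq> U" using C K' Y by auto
  have el: "K \<subseteq> gcl n U R C" "gcl n U R C \<noteq> C" using edge_line[OF Y K C] by auto
  have lc: "clique n U Rhat (gcl n U R C)" using line_clique[OF CU fC C(2) el(2)] .
  have "clique n Y (restr Rhat Y) (gcl n U R C \<inter> Y)"
    unfolding clique_def
  proof (intro conjI allI impI)
    show "gcl n U R C \<inter> Y \<subseteq> Y" by blast
    have "K \<subseteq> gcl n U R C \<inter> Y" using el K' by blast
    hence "card K \<le> card (gcl n U R C \<inter> Y)" using Y card_mono by (metis finite_Int)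
    thus "infinite (gcl n U R C \<inter> Y) \<or> n \<le> card (gcl n U R C \<inter> Y)" using K' by simp
    fix xs assume "length xs = n \<and> distinct xs \<and> set xs \<subseteq> gcl n U R C \<inter> Y"
    thus "restr Rhat Y xs" using lc by (auto simp: clique_def restr_def)
  qed
  then obtain T where "T \<in> maxcliques n Y (restr Rhat Y)" "gcl n U R C \<inter> Y \<subseteq> T" using zorn_clique by blast
  thus ?thesis using el K' by blast
qed

lemma T_props:
  assumes Y: "finite Y" "Y \<subseteq> U" and T: "T \<in> maxcliques n Y (restr Rhat Y)"
  shows "T \<subseteq> Y" "finite T" "n \<le> card T"
proof -
  show "T \<subseteq> Y" using T by (auto simp: maxcliques_def clique_def)
  thus "finite T" using Y finite_subset by blast
  thus "n \<le> card T" using T by (auto simp: maxcliques_def clique_def)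
qed

lemma finite_maxcl: "finite Y \<Longrightarrow> finite (maxcliques n Y R')"
  by (rule finite_subset[of _ "Pow Y"]) (auto simp: maxcliques_def clique_def)

lemma starcardT: "n \<le> card T \<Longrightarrow> starcard n T = int (card T) - int (n - 1)"
  using npos by (simp add: starcard_def)

lemma hat_le:
  assumes Y: "finite Y" "Y \<subseteq> U"
  shows "delta n Rhat Y \<le> delta n R Y"
proof -
  let ?T = "maxcliques n Y (restr Rhat Y)"
  have fT: "finite ?T" using finite_maxcl Y by blast
  have "E n R Y \<subseteq> (\<Union>T\<in>?T. E n R T)"
  proof
    fix K assume K: "K \<in> E n R Y"
    then obtain T where "T \<in> ?T" "K \<subseteq> T" using edge_in_T[OF Y] by blast
    thus "K \<in> (\<Union>T\<in>?T. E n R T)" using K by (auto simp: E_def)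
  qed
  moreover have fU: "finite (\<Union>T\<in>?T. E n R T)"
  proof (rule finite_UN_I[OF fT])
    fix T assume "T \<in> ?T" thus "finite (E n R T)" using T_props(2)[OF Y] finite_E by blast
  qed
  ultimately have "card (E n R Y) \<le> card (\<Union>T\<in>?T. E n R T)"
    by (intro card_mono)
  also have "\<dots> \<le> (\<Sum>T\<in>?T. card (E n R T))" by (rule card_UN_le[OF fT])
  finally have s2: "int (card (E n R Y)) \<le> (\<Sum>T\<in>?T. int (card (E n R T)))"
    by (simp only: of_nat_sum[symmetric] of_nat_le_iff)
  have s1: "(\<Sum>T\<in>?T. int (card (E n R T))) \<le> (\<Sum>T\<in>?T. starcard n T)"
  proof (rule sum_mono)
    fix T assume T: "T \<in> ?T"
    note tp = T_props[OF Y T]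
    obtain C where C: "C \<subseteq> T" "card C = n - 1" using sub_n1[OF tp(3)] by blast
    have "int (n - 1) \<le> delta n R T" using pure[OF C(1) _ tp(2) C(2)] tp Y by auto
    thus "int (card (E n R T)) \<le> starcard n T" using dform[of T] tp Y starcardT[OF tp(3)] by auto
  qed
  show ?thesis using s1 s2 dform[OF Y] unfolding delta_def[of n Rhat] by simp
qed


lemma hat_ge:
  assumes Y: "finite Y" "Y \<subseteq> U"
  shows "\<exists>Z. Y \<subseteq> Z \<and> Z \<subseteq> U \<and> finite Z \<and> delta n R Z \<le> delta n Rhat Y"
proof -
  let ?T = "maxcliques n Y (restr Rhat Y)"
  have fT: "finite ?T" using finite_maxcl Y by blast
  let ?P = "\<lambda>T C W. C \<subseteq> T \<and> finite C \<and> card C = n - 1 \<and> T = gcl n U R C \<inter> Y \<and> T \<subseteq> W \<and>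
     W \<subseteq> gcl n U R C \<and> W \<subseteq> U \<and> finite W \<and> delta n R W \<le> int (n - 1)"
  have "\<forall>T\<in>?T. \<exists>p. ?P T (fst p) (snd p)"
  proof
    fix T assume T: "T \<in> ?T"
    note tp = T_props[OF Y T]
    obtain C where C: "C \<subseteq> T" "finite C" "card C = n - 1" "gcl n U R C \<noteq> C" "T = gcl n U R C \<inter> Y"
      using T_line[OF Y T] by blast
    have CU: "C \<subseteq> U" using C tp Y by auto
    obtain W where W: "C \<union> T \<subseteq> W" "W \<subseteq> U" "finite W" "delta n R W \<le> int (n - 1)"
      using cl_fin[OF CU C(2,3) tp(2)] C(5) by blast
    have WG: "W \<subseteq> gcl n U R C" using W_in_gcl[of C W] W C by blast
    have PT: "?P T C W" using C W WG by blast
    have "?P T (fst (C, W)) (snd (C, W))" unfolding fst_conv snd_conv by (rule PT)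
    thus "\<exists>p. ?P T (fst p) (snd p)" by (rule exI)
  qed
  then obtain f where f: "\<And>T. T \<in> ?T \<Longrightarrow> ?P T (fst (f T)) (snd (f T))" by metis
  define Wf where "Wf T = snd (f T)" for T
  define Cf where "Cf T = fst (f T)" for T
  have P: "\<And>T. T \<in> ?T \<Longrightarrow> ?P T (Cf T) (Wf T)" using f unfolding Wf_def Cf_def by blast
  have WY: "Wf T \<inter> Y = T" if "T \<in> ?T" for T using P[OF that] T_props[OF Y that] by blast
  have disj: "E n R (Wf T1) \<inter> E n R (Wf T2) = {}" if T12: "T1 \<in> ?T" "T2 \<in> ?T" "T1 \<noteq> T2" for T1 T2
  proof (rule ccontr)
    assume "E n R (Wf T1) \<inter> E n R (Wf T2) \<noteq> {}"
    then obtain K where K: "K \<subseteq> Wf T1" "K \<subseteq> Wf T2" "card K = n" by (auto simp: E_def edge_def)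
    obtain D where D: "D \<subseteq> K" "card D = n - 1" "finite D" using sub_n1[of K] K by auto
    have P1: "?P T1 (Cf T1) (Wf T1)" and P2: "?P T2 (Cf T2) (Wf T2)" using P T12 by auto
    have C1U: "Cf T1 \<subseteq> U" using P1 T_props[OF Y T12(1)] Y by blast
    have C2U: "Cf T2 \<subseteq> U" using P2 T_props[OF Y T12(2)] Y by blast
    have "gcl n U R D = gcl n U R (Cf T1)" using line_eq[OF C1U _ _ D(3) D(2)] P1 D K by blast
    moreover have "gcl n U R D = gcl n U R (Cf T2)" using line_eq[OF C2U _ _ D(3) D(2)] P2 D K by blast
    ultimately have "T1 = T2" using P1 P2 by metis
    thus False using T12 by blast
  qed
  define Z where "Z = Y \<union> (\<Union>T\<in>?T. Wf T)"
  have fW: "\<And>T. T \<in> ?T \<Longrightarrow> finite (Wf T)" using P by blast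
  have fZ: "finite Z" unfolding Z_def using Y fT fW by blast
  have ZU: "Z \<subseteq> U" unfolding Z_def using Y P by blast
  have "Z = Y \<union> (\<Union>T\<in>?T. Wf T - Y)" unfolding Z_def by blast
  hence "card Z \<le> card Y + card (\<Union>T\<in>?T. Wf T - Y)" using card_Un_le by metis
  also have "card (\<Union>T\<in>?T. Wf T - Y) \<le> (\<Sum>T\<in>?T. card (Wf T - Y))" by (rule card_UN_le[OF fT])
  finally have "int (card Z) \<le> int (card Y) + (\<Sum>T\<in>?T. int (card (Wf T - Y)))"
    by (simp only: of_nat_sum[symmetric] of_nat_add[symmetric] of_nat_le_iff)
  moreover have "\<And>T. T \<in> ?T \<Longrightarrow> int (card (Wf T - Y)) = int (card (Wf T)) - int (card T)"
  proof -
    fix T assume T: "T \<in> ?T"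
    have "card (Wf T - Y) = card (Wf T) - card (Wf T \<inter> Y)" using fW[OF T] by (simp add: card_Diff_subset_Int)
    moreover have "card T \<le> card (Wf T)" using P[OF T] fW[OF T] card_mono by blast
    ultimately show "int (card (Wf T - Y)) = int (card (Wf T)) - int (card T)" using WY[OF T] by simp
  qed
  ultimately have a1: "int (card Z) \<le> int (card Y) + (\<Sum>T\<in>?T. int (card (Wf T)) - int (card T))"
    by (metis (no_types, lifting) sum.cong)
  have "(\<Union>T\<in>?T. E n R (Wf T)) \<subseteq> E n R Z" unfolding Z_def by (auto simp: E_def)
  hence "card (\<Union>T\<in>?T. E n R (Wf T)) \<le> card (E n R Z)" using finite_E[OF fZ] card_mono by blast
  moreover have "card (\<Union>T\<in>?T. E n R (Wf T)) = (\<Sum>T\<in>?T. card (E n R (Wf T)))"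
    using fT fW finite_E disj by (intro card_UN_disjoint) auto
  ultimately have "(\<Sum>T\<in>?T. card (E n R (Wf T))) \<le> card (E n R Z)"
    by simp
  hence "(\<Sum>T\<in>?T. int (card (E n R (Wf T)))) \<le> int (card (E n R Z))"
    by (simp only: of_nat_sum[symmetric] of_nat_le_iff)
  moreover have "(\<Sum>T\<in>?T. int (card (Wf T)) - int (n - 1)) \<le> (\<Sum>T\<in>?T. int (card (E n R (Wf T))))"
  proof (rule sum_mono)
    fix T assume T: "T \<in> ?T"
    show "int (card (Wf T)) - int (n - 1) \<le> int (card (E n R (Wf T)))"
      using P[OF T] dform[of "Wf T"] by auto
  qed
  ultimately have a2: "(\<Sum>T\<in>?T. int (card (Wf T)) - int (n - 1)) \<le> int (card (E n R Z))" by linarith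
  have a3: "delta n Rhat Y = int (card Y) - (\<Sum>T\<in>?T. int (card T) - int (n - 1))"
  proof -
    have "(\<Sum>T\<in>?T. starcard n T) = (\<Sum>T\<in>?T. int (card T) - int (n - 1))"
      by (rule sum.cong[OF refl], rule starcardT, rule T_props(3)[OF Y], assumption)
    thus ?thesis unfolding delta_def[of n Rhat] by simp
  qed
  have "delta n R Z \<le> delta n Rhat Y"
    using a1 a2 a3 dform[OF fZ ZU] by (simp add: sum_subtractf)
  thus ?thesis using fZ ZU unfolding Z_def by blast
qed

lemma dim_eq:
  assumes "X \<subseteq> U"
  shows "dim n U R X = dim n U Rhat X"
proof (rule antisym)
  show "dim n U R X \<le> dim n U Rhat X"
    unfolding dim_def[of n U Rhat]
  proof (rule INF_greatest)
    fix Y assume "Y \<in> {Y. X \<subseteq> Y \<and> Y \<subseteq> U \<and> finite Y}"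
    hence Y: "X \<subseteq> Y" "Y \<subseteq> U" "finite Y" by auto
    obtain Z where Z: "Y \<subseteq> Z" "Z \<subseteq> U" "finite Z" "delta n R Z \<le> delta n Rhat Y" using hat_ge[OF Y(3,2)] by blast
    have "dim n U R X \<le> ereal (real_of_int (delta n R Z))" using Y Z by (intro dim_le) auto
    also have "\<dots> \<le> ereal (real_of_int (delta n Rhat Y))" using Z(4) by simp
    finally show "dim n U R X \<le> ereal (real_of_int (delta n Rhat Y))" .
  qed
  show "dim n U Rhat X \<le> dim n U R X"
    unfolding dim_def[of n U R]
  proof (rule INF_greatest)
    fix Y assume "Y \<in> {Y. X \<subseteq> Y \<and> Y \<subseteq> U \<and> finite Y}"
    hence Y: "X \<subseteq> Y" "Y \<subseteq> U" "finite Y" by auto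
    have "dim n U Rhat X \<le> ereal (real_of_int (delta n Rhat Y))" using Y by (intro dim_le) auto
    also have "\<dots> \<le> ereal (real_of_int (delta n R Y))" using hat_le[OF Y(3,2)] by simp
    finally show "dim n U Rhat X \<le> ereal (real_of_int (delta n R Y))" .
  qed
qed

lemma hat_empty: "delta n Rhat {} = 0"
proof -
  have "maxcliques n {} (restr Rhat {}) = {}" using npos by (auto simp: maxcliques_def clique_def)
  thus ?thesis by (simp add: delta_def)
qed

lemma hat_single_le1: "delta n Rhat {a} \<le> 1"
proof -
  have "0 \<le> (\<Sum>K\<in>maxcliques n {a} (restr Rhat {a}). starcard n K)"
    by (rule sum_nonneg) (simp add: starcard_def)
  thus ?thesis by (simp add: delta_def)
qed

lemma hat_single_le:
  assumes Z: "finite Z" "Z \<subseteq> U" "a \<in> Z"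
  shows "delta n Rhat {a} \<le> delta n R Z"
proof (cases "2 \<le> n")
  case True
  have "a \<in> U" using Z by auto
  hence "delta n R {a} = 1" using dform[of "{a}"] E_single2[OF True] by simp
  thus ?thesis using strong_single[OF Z] hat_single_le1[of a] by simp
next
  case False
  hence n1: "n = 1" using npos by simp
  have d0: "0 \<le> delta n R Z" using delta_nonneg[OF Z(1,2)] .
  show ?thesis
  proof (cases "1 \<le> delta n R Z")
    case True thus ?thesis using hat_single_le1[of a] by simp
  next
    case False
    hence "delta n R Z \<le> int (n - 1)" using n1 by simp
    hence ag: "a \<in> gcl n U R {}" using gcl_iff[of "{}" a] Z n1 by auto
    hence ne: "gcl n U R {} \<noteq> {}" by blast
    have lc: "clique n U Rhat (gcl n U R {})" using line_clique[of "{}"] ne n1 by simp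
    have "clique n {a} (restr Rhat {a}) {a}"
      unfolding clique_def
    proof (intro conjI allI impI)
      fix xs assume xs: "length xs = n \<and> distinct xs \<and> set xs \<subseteq> {a}"
      hence "set xs \<subseteq> gcl n U R {}" using ag by blast
      thus "restr Rhat {a} xs" using lc xs by (auto simp: clique_def restr_def)
    qed (use n1 in auto)
    hence "{a} \<in> maxcliques n {a} (restr Rhat {a})"
      by (auto simp: maxcliques_def clique_def)
    hence "starcard n {a} \<le> (\<Sum>K\<in>maxcliques n {a} (restr Rhat {a}). starcard n K)"
      by (intro member_le_sum finite_maxcl) (auto simp: starcard_def)
    hence "delta n Rhat {a} \<le> 0" using n1 by (simp add: delta_def starcard_def)
    thus ?thesis using d0 by simp
  qed
qed

lemma hat_mono_a:
  assumes X: "finite X" "X \<subseteq> U"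
  shows "delta n Rhat (X \<inter> {a}) \<le> delta n Rhat X"
proof -
  obtain Z where Z: "X \<subseteq> Z" "Z \<subseteq> U" "finite Z" "delta n R Z \<le> delta n Rhat X" using hat_ge[OF X] by blast
  show ?thesis
  proof (cases "a \<in> X")
    case True
    hence "X \<inter> {a} = {a}" by blast
    thus ?thesis using hat_single_le[OF Z(3,2)] True Z by force
  next
    case False
    hence "X \<inter> {a} = {}" by blast
    thus ?thesis using hat_empty delta_nonneg[OF Z(3,2)] Z by simp
  qed
qed

lemma part1:
  assumes a: "a \<in> U"
  shows "strong n U Rhat {a}"
  unfolding strong_def
proof (intro conjI allI impI)
  show "{a} \<subseteq> U" using a by simp
  fix X assume X: "{a} \<subseteq> X \<and> X \<subseteq> U"
  show "0 \<le> delta_rel n Rhat X {a}"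
  proof (cases "finite X")
    case True
    have "X \<inter> {a} = {a}" using X by blast
    moreover have "delta n Rhat (X \<inter> {a}) \<le> delta n Rhat X" using hat_mono_a[of X a] X True by blast
    ultimately have "delta n Rhat {a} \<le> delta n Rhat X" by simp
    thus ?thesis using True by (simp add: delta_rel_def)
  next
    case False
    have "0 \<le> (INF Y \<in> {Y. Y \<subseteq> X \<and> finite Y}. ereal (real_of_int (delta n Rhat Y - delta n Rhat (Y \<inter> {a}))))"
    proof (rule INF_greatest)
      fix Y assume "Y \<in> {Y. Y \<subseteq> X \<and> finite Y}"
      thus "0 \<le> ereal (real_of_int (delta n Rhat Y - delta n Rhat (Y \<inter> {a})))"
        using hat_mono_a[of Y] X by auto
    qed
    thus ?thesis using False by (simp add: delta_rel_def)
  qed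
qed

end


lemma delta0: "\<not> R' [] \<Longrightarrow> delta 0 R' X = int (card X)"
proof -
  assume h: "\<not> R' []"
  have "maxcliques 0 X (restr R' X) = {}"
    using h by (auto simp: maxcliques_def clique_def restr_def)
  thus ?thesis by (simp add: delta_def)
qed

lemma n0_R:
  assumes fin: "\<And>B. finite B \<Longrightarrow> B \<subseteq> U \<Longrightarrow> inCC 0 B (restr R B)"
  shows "\<not> R []"
proof
  assume r: "R []"
  have "indep 0 {} (restr R {}) {}" using fin[of "{}"] by (simp add: inCC_def)
  hence d: "dim 0 {} (restr R {}) {} = 0" by (simp add: indep_def zero_ereal_def)
  have mc: "maxcliques 0 {} (restr R {}) = {{}}"
    using r by (auto simp: maxcliques_def clique_def restr_def)
  have "delta 0 (restr R {}) {} = -1" using mc by (simp add: delta_def restr_restr starcard_def)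
  moreover have "dim 0 {} (restr R {}) {} \<le> ereal (real_of_int (delta 0 (restr R {}) {}))"
    by (rule dim_le) auto
  ultimately show False using d by simp
qed

lemma n0_Rhat:
  assumes hstruc: "is_struc 0 U Rhat"
    and hcl: "maxcliques 0 U Rhat =
        {gcl 0 U R C | C. C \<subseteq> U \<and> finite C \<and> card C = 0 - 1 \<and> gcl 0 U R C \<noteq> C}"
    and nR: "\<not> R []"
  shows "\<not> Rhat []"
proof
  assume r: "Rhat []"
  have "clique 0 U Rhat U" using r by (auto simp: clique_def)
  then obtain M where "M \<in> maxcliques 0 U Rhat" using zorn_clique by blast
  hence "M \<in> {gcl 0 U R C | C. C \<subseteq> U \<and> finite C \<and> card C = 0 - 1 \<and> gcl 0 U R C \<noteq> C}" unfolding hcl .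
  then obtain C where C: "C \<subseteq> U" "finite C" "card C = 0 - 1" "gcl 0 U R C \<noteq> C" "M = gcl 0 U R C"
    unfolding mem_Collect_eq by (elim exE conjE) (rule that)
  have C0: "C = {}" using C(2,3) by simp
  have "gcl 0 U R {} \<noteq> {}" using C(4) C0 by simp
  then obtain x where x: "x \<in> gcl 0 U R {}" by blast
  hence xU: "x \<in> U" and eq: "dim 0 U R {x} = dim 0 U R {}" by (auto simp: gcl_def)
  have "ereal (real_of_int 1) \<le> dim 0 U R {x}"
  proof (rule dim_ge)
    fix Y assume "{x} \<subseteq> Y" "Y \<subseteq> U" "finite Y"
    thus "1 \<le> delta 0 R Y" using delta0[of R, OF nR] by (simp add: card_gt_0_iff Suc_le_eq) (auto)
  qed
  moreover have "dim 0 U R {} \<le> ereal (real_of_int (delta 0 R {}))" by (rule dim_le) auto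
  ultimately have "ereal 1 \<le> ereal 0" using eq delta0[of R, OF nR] by (metis of_int_0 of_int_1 card.empty of_nat_0 order_trans)
  thus False by simp
qed


theorem mainTheorem7:
  fixes n :: nat and U :: "nat set" and R Rhat :: "nat list \<Rightarrow> bool"
  assumes gen: "generic_CC n U R"
    and hat_struc: "is_struc n U Rhat"
    and hat_cliques: "maxcliques n U Rhat =
        {gcl n U R C | C. C \<subseteq> U \<and> finite C \<and> card C = n - 1 \<and> gcl n U R C \<noteq> C}"
  shows "(\<forall>a \<in> U. strong n U Rhat {a}) \<and>
         (\<forall>X. finite X \<and> X \<subseteq> U \<longrightarrow> dim n U R X = dim n U Rhat X)"
proof (cases "n = 0")
  case True
  have fin: "\<And>B. finite B \<Longrightarrow> B \<subseteq> U \<Longrightarrow> inCC 0 B (restr R B)" using gen True by (simp add: generic_CC_def)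
  have nR: "\<not> R []" by (rule n0_R[OF fin])
  have nRh: "\<not> Rhat []" using n0_Rhat[of U Rhat R] hat_struc hat_cliques True nR by simp
  have dR: "\<And>X. delta n R X = int (card X)" using delta0[of R, OF nR] True by simp
  have dRh: "\<And>X. delta n Rhat X = int (card X)" using delta0[of Rhat, OF nRh] True by simp
  have s: "strong n U Rhat {a}" if a: "a \<in> U" for a
    unfolding strong_def
  proof (intro conjI allI impI)
    show "{a} \<subseteq> U" using a by simp
    fix X assume X: "{a} \<subseteq> X \<and> X \<subseteq> U"
    show "0 \<le> delta_rel n Rhat X {a}"
    proof (cases "finite X")
      case True
      hence "card {a} \<le> card X" using X card_mono by blast
      thus ?thesis using True by (simp add: delta_rel_def dRh)
    next
      case False
      have "0 \<le> (INF Y \<in> {Y. Y \<subseteq> X \<and> finite Y}. ereal (real_of_int (delta n Rhat Y - delta n Rhat (Y \<inter> {a}))))"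
      proof (rule INF_greatest)
        fix Y assume "Y \<in> {Y. Y \<subseteq> X \<and> finite Y}"
        hence "card (Y \<inter> {a}) \<le> card Y" using card_mono by (metis Int_lower1 mem_Collect_eq)
        thus "0 \<le> ereal (real_of_int (delta n Rhat Y - delta n Rhat (Y \<inter> {a})))" by (simp add: dRh)
      qed
      thus ?thesis using False by (simp add: delta_rel_def)
    qed
  qed
  have "dim n U R X = dim n U Rhat X" for X unfolding dim_def dR dRh ..
  thus ?thesis using s by blast
next
  case False
  interpret mt n U R Rhat
    by unfold_locales (use gen hat_struc hat_cliques False in \<open>auto simp: generic_CC_def\<close>)
  show ?thesis using part1 dim_eq by blast
qed

end
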